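(* Let $G\le\mathrm{Aut}(\mathcal{T}_d)$ be any self-similar group. Then every non-trivial element of the Röver–Nekrashevych group $V_d(G)$ has infinitely many $[F_d,F_d]$-conjugates; equivalently, the inclusion $L([F_d,F_d])\subseteq L(V_d(G))$ is irreducible.
   Context: Fix $d\ge2$. $\mathcal{T}_d$ is the infinite rooted $d$-regular tree with vertex set $\{1,\dots,d\}^*$ (finite words, root the empty word), $w$ adjacent to $wi$. Every automorphism permutes the level-1 vertices, giving $\rho:\mathrm{Aut}(\mathcal{T}_d)\to S_d$. Let $\mathcal{T}_d(i)$ be the subtree spanned by words $iw$ and $\delta_i:\mathcal{T}_d\to\mathcal{T}_d(i)$, $w\mapsto iw$. For $g\in\mathrm{Aut}(\mathcal{T}_d)$ put $\phi_i(g)=\delta^{-1}_{\rho(g)i}\circ g|_{\mathcal{T}_d(i)}\circ\delta_i$. $G\le\mathrm{Aut}(\mathcal{T}_d)$ is self-similar if $\phi_i(G)\subseteq G$ for all $i$. Let $C_d=\{1,\dots,d\}^{\mathbb{N}}$ (the boundary of $\mathcal{T}_d$, on which $\mathrm{Aut}(\mathcal{T}_d)$ acts), and for $w\in\{1,\dots,d\}^*$ let $C_d(w)=\{w\kappa:\kappa\in C_d\}$ with homeomorphism $h_w:C_d\to C_d(w)$, $\kappa\mapsto w\kappa$. $V_d(G)$ is the group of homeomorphisms of $C_d$ obtained by choosing two partitions of $C_d$ into the same number $n$ of cones $C_d(w_1^+),\dots,C_d(w_n^+)$ and $C_d(w_1^-),\dots,C_d(w_n^-)$, a bijection $i\mapsto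 j(i)$, and $g_1,\dots,g_n\in G$, and mapping $C_d(w_i^+)$ to $C_d(w_{j(i)}^-)$ via $h_{w_{j(i)}^-}\circ g_i\circ h_{w_i^+}^{-1}$. $F_d\le V_d(G)$ is the subgroup of such homeomorphisms with all $g_i=1$ that preserve the lexicographic order of $C_d$ (the Higman–Thompson group $F_d$), and $[F_d,F_d]$ its commutator subgroup. An inclusion $N\subseteq M$ of von Neumann algebras is irreducible if $N'\cap M\subseteq N$. $L(G)$ is the group von Neumann algebra. *)

theory Defs
  imports "HOL-Algebra.Bij" "HOL-Algebra.Solvable_Groups"
begin

text \<open>Vertices of the rooted d-regular tree: finite words over {1..d}.
  The child of w by letter i is w @ [i]; the word "i w" is i # w.\<close>

definition words :: "nat \<Rightarrow> nat list set" where
  "words d = {w. set w \<subseteq> {1..d}}"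

definition tree_adj :: "nat \<Rightarrow> nat list \<Rightarrow> nat list \<Rightarrow> bool" where
  "tree_adj d u v \<longleftrightarrow> (\<exists>i\<in>{1..d}. v = u @ [i] \<or> u = v @ [i])"

definition AutT :: "nat \<Rightarrow> (nat list \<Rightarrow> nat list) monoid" where
  "AutT d = (BijGroup (words d))
     \<lparr>carrier := {g \<in> Bij (words d).
        \<forall>u\<in>words d. \<forall>v\<in>words d. tree_adj d u v \<longleftrightarrow> tree_adj d (g u) (g v)}\<rparr>"

text \<open>phi_i(g) = delta_{rho(g) i}^{-1} o g|_{T(i)} o delta_i: w \<mapsto> tail of g(i w).\<close>

definition sect :: "nat \<Rightarrow> nat \<Rightarrow> (nat list \<Rightarrow> nat list) \<Rightarrow> (nat list \<Rightarrow> nat list)" where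
  "sect d i g = (\<lambda>w\<in>words d. tl (g (i # w)))"

definition self_similar :: "nat \<Rightarrow> (nat list \<Rightarrow> nat list) set \<Rightarrow> bool" where
  "self_similar d G \<longleftrightarrow> subgroup G (AutT d) \<and> (\<forall>g\<in>G. \<forall>i\<in>{1..d}. sect d i g \<in> G)"

definition bdry :: "nat \<Rightarrow> (nat \<Rightarrow> nat) set" where
  "bdry d = {\<kappa>. \<forall>n. \<kappa> n \<in> {1..d}}"

definition bact :: "(nat list \<Rightarrow> nat list) \<Rightarrow> (nat \<Rightarrow> nat) \<Rightarrow> (nat \<Rightarrow> nat)" where
  "bact g \<kappa> = (\<lambda>n. g (map \<kappa> [0..<Suc n]) ! n)"

definition cone :: "nat \<Rightarrow> nat list \<Rightarrow> (nat \<Rightarrow> nat) set" where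
  "cone d w = {\<kappa> \<in> bdry d. map \<kappa> [0..<length w] = w}"

definition hcone :: "nat list \<Rightarrow> (nat \<Rightarrow> nat) \<Rightarrow> (nat \<Rightarrow> nat)" where
  "hcone w \<kappa> = (\<lambda>n. if n < length w then w ! n else \<kappa> (n - length w))"

definition cone_partition :: "nat \<Rightarrow> nat \<Rightarrow> (nat \<Rightarrow> nat list) \<Rightarrow> bool" where
  "cone_partition d n ws \<longleftrightarrow>
     (\<forall>i<n. ws i \<in> words d) \<and>
     (\<forall>i<n. \<forall>j<n. i \<noteq> j \<longrightarrow> cone d (ws i) \<inter> cone d (ws j) = {}) \<and>
     (\<Union>i<n. cone d (ws i)) = bdry d"

abbreviation BdryGroup :: "nat \<Rightarrow> ((nat \<Rightarrow> nat) \<Rightarrow> (nat \<Rightarrow> nat)) monoid" where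
  "BdryGroup d \<equiv> BijGroup (bdry d)"

definition VdG :: "nat \<Rightarrow> (nat list \<Rightarrow> nat list) set \<Rightarrow> ((nat \<Rightarrow> nat) \<Rightarrow> (nat \<Rightarrow> nat)) set" where
  "VdG d G = {f \<in> Bij (bdry d). \<exists>n wp wm j g.
      cone_partition d n wp \<and> cone_partition d n wm \<and>
      bij_betw j {..<n} {..<n} \<and> (\<forall>i<n. g i \<in> G) \<and>
      (\<forall>i<n. \<forall>\<kappa>\<in>bdry d. f (hcone (wp i) \<kappa>) = hcone (wm (j i)) (bact (g i) \<kappa>))}"

definition lex_less :: "(nat \<Rightarrow> nat) \<Rightarrow> (nat \<Rightarrow> nat) \<Rightarrow> bool" where
  "lex_less \<kappa> \<mu> \<longleftrightarrow> (\<exists>n. (\<forall>m<n. \<kappa> m = \<mu> m) \<and> \<kappa> n < \<mu> n)"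

definition Fd :: "nat \<Rightarrow> ((nat \<Rightarrow> nat) \<Rightarrow> (nat \<Rightarrow> nat)) set" where
  "Fd d = {f \<in> VdG d {\<one>\<^bsub>AutT d\<^esub>}.
      \<forall>\<kappa>\<in>bdry d. \<forall>\<mu>\<in>bdry d. lex_less \<kappa> \<mu> \<longrightarrow> lex_less (f \<kappa>) (f \<mu>)}"

end

theory Submission
  imports Defs
begin


definition scons :: "nat \<Rightarrow> (nat \<Rightarrow> nat) \<Rightarrow> (nat \<Rightarrow> nat)" where
  "scons a \<alpha> = (\<lambda>n. if n = 0 then a else \<alpha> (n - 1))"
definition stl :: "(nat \<Rightarrow> nat) \<Rightarrow> (nat \<Rightarrow> nat)" where
  "stl \<kappa> = (\<lambda>n. \<kappa> (Suc n))"
definition shiftn :: "nat \<Rightarrow> (nat \<Rightarrow> nat) \<Rightarrow> (nat \<Rightarrow> nat)" where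
  "shiftn m \<kappa> = (\<lambda>n. \<kappa> (n + m))"

lemma scons_0[simp]: "scons a \<alpha> 0 = a" by (simp add: scons_def)
lemma scons_Suc[simp]: "scons a \<alpha> (Suc n) = \<alpha> n" by (simp add: scons_def)
lemma stl_scons[simp]: "stl (scons a \<alpha>) = \<alpha>" by (simp add: stl_def scons_def)
lemma scons_stl: "scons (\<kappa> 0) (stl \<kappa>) = \<kappa>"
  by (rule ext) (simp add: scons_def stl_def)
lemma scons_eq_iff: "scons a \<alpha> = scons b \<beta> \<longleftrightarrow> a = b \<and> \<alpha> = \<beta>"
  by (metis scons_0 stl_scons)

lemma hcone_Nil[simp]: "hcone [] \<rho> = \<rho>" by (simp add: hcone_def)
lemma hcone_Cons: "hcone (a#w) \<rho> = scons a (hcone w \<rho>)"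
  by (rule ext) (auto simp: hcone_def scons_def nth_Cons')
lemma hcone_append: "hcone (u@v) \<rho> = hcone u (hcone v \<rho>)"
  by (induction u) (simp_all add: hcone_Cons)

lemma bdry_scons: "scons a \<alpha> \<in> bdry d \<longleftrightarrow> a \<in> {1..d} \<and> \<alpha> \<in> bdry d"
proof
  assume h: "scons a \<alpha> \<in> bdry d"
  have "scons a \<alpha> (Suc n) \<in> {1..d}" for n using h unfolding bdry_def by blast
  then have "\<alpha> \<in> bdry d" unfolding bdry_def by simp
  moreover have "scons a \<alpha> 0 \<in> {1..d}" using h unfolding bdry_def by blast
  ultimately show "a \<in> {1..d} \<and> \<alpha> \<in> bdry d" by simp
next
  assume "a \<in> {1..d} \<and> \<alpha> \<in> bdry d"
  then show "scons a \<alpha> \<in> bdry d" by (auto simp: bdry_def scons_def)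
qed
lemma bdry_stl: "\<kappa> \<in> bdry d \<Longrightarrow> stl \<kappa> \<in> bdry d"
  by (simp add: bdry_def stl_def)
lemma bdry_shiftn: "\<kappa> \<in> bdry d \<Longrightarrow> shiftn m \<kappa> \<in> bdry d"
  by (simp add: bdry_def shiftn_def)

lemma words_Cons: "a#w \<in> words d \<longleftrightarrow> a \<in> {1..d} \<and> w \<in> words d"
  by (auto simp: words_def)
lemma words_append: "u@w \<in> words d \<longleftrightarrow> u \<in> words d \<and> w \<in> words d"
  by (auto simp: words_def)

lemma hcone_bdry: "w \<in> words d \<Longrightarrow> \<rho> \<in> bdry d \<Longrightarrow> hcone w \<rho> \<in> bdry d"
  by (induction w) (auto simp: hcone_Cons bdry_scons words_Cons)

lemma cone_iff: "\<kappa> \<in> cone d w \<longleftrightarrow> \<kappa> \<in> bdry d \<and> (\<forall>n<length w. \<kappa> n = w!n)"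
proof -
  have "map \<kappa> [0..<length w] = w \<longleftrightarrow> (\<forall>n<length w. \<kappa> n = w!n)"
    unfolding list_eq_iff_nth_eq by simp
  then show ?thesis unfolding cone_def by blast
qed

lemma cone_Nil[simp]: "cone d [] = bdry d" by (auto simp: cone_iff)

lemma cone_Cons: "\<kappa> \<in> cone d (a#w) \<longleftrightarrow> \<kappa> \<in> bdry d \<and> \<kappa> 0 = a \<and> stl \<kappa> \<in> cone d w"
proof -
  have "(\<forall>n<length (a#w). \<kappa> n = (a#w)!n) \<longleftrightarrow> \<kappa> 0 = a \<and> (\<forall>n<length w. stl \<kappa> n = w!n)"
    by (simp add: All_less_Suc2 stl_def) 
  then show ?thesis unfolding cone_iff using bdry_stl by blast
qed

lemma hcone_in_cone: "w \<in> words d \<Longrightarrow> \<rho> \<in> bdry d \<Longrightarrow> hcone w \<rho> \<in> cone d w"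
  unfolding cone_iff by (simp add: hcone_bdry) (simp add: hcone_def)

lemma cone_hcone_eq: "\<kappa> \<in> cone d w \<Longrightarrow> hcone w (shiftn (length w) \<kappa>) = \<kappa>"
  unfolding cone_iff by (intro ext) (simp add: hcone_def shiftn_def)

lemma shiftn_hcone[simp]: "shiftn (length w) (hcone w \<rho>) = \<rho>"
  by (rule ext) (simp add: hcone_def shiftn_def)

lemma hcone_inj: "hcone w \<rho> = hcone w \<rho>' \<Longrightarrow> \<rho> = \<rho>'"
  by (metis shiftn_hcone)

lemma cone_sub_bdry: "cone d w \<subseteq> bdry d" by (auto simp: cone_def)

lemma cone_append_sub: "cone d (u@v) \<subseteq> cone d u"
  by (auto simp: cone_iff nth_append)

lemma lex_scons: "lex_less (scons a \<alpha>) (scons b \<beta>) \<longleftrightarrow> a < b \<or> (a = b \<and> lex_less \<alpha> \<beta>)"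
proof
  assume "lex_less (scons a \<alpha>) (scons b \<beta>)"
  then obtain n where n: "\<forall>m<n. scons a \<alpha> m = scons b \<beta> m" "scons a \<alpha> n < scons b \<beta> n"
    unfolding lex_less_def by blast
  show "a < b \<or> (a = b \<and> lex_less \<alpha> \<beta>)"
  proof (cases n)
    case 0 then show ?thesis using n by simp
  next
    case (Suc k)
    have "a = b" using n(1) Suc by (metis scons_0 zero_less_Suc)
    moreover have "lex_less \<alpha> \<beta>" unfolding lex_less_def
      using n Suc by (metis Suc_mono scons_Suc)
    ultimately show ?thesis by simp
  qed
next
  assume "a < b \<or> (a = b \<and> lex_less \<alpha> \<beta>)"
  then show "lex_less (scons a \<alpha>) (scons b \<beta>)"
  proof
    assume "a < b" then show ?thesis unfolding lex_less_def by (intro exI[of _ 0]) simp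
  next
    assume "a = b \<and> lex_less \<alpha> \<beta>"
    then obtain n where n: "a = b" "\<forall>m<n. \<alpha> m = \<beta> m" "\<alpha> n < \<beta> n"
      unfolding lex_less_def by blast
    show ?thesis unfolding lex_less_def
      by (rule exI[of _ "Suc n"]) (auto simp: n scons_def)
  qed
qed

lemma lex_hcone: "lex_less (hcone w \<alpha>) (hcone w \<beta>) \<longleftrightarrow> lex_less \<alpha> \<beta>"
  by (induction w) (simp_all add: hcone_Cons lex_scons)


definition ppart :: "nat \<Rightarrow> nat list set \<Rightarrow> bool" where
  "ppart d P \<longleftrightarrow> finite P \<and> P \<subseteq> words d \<and> (\<forall>\<kappa>\<in>bdry d. \<exists>!p. p \<in> P \<and> \<kappa> \<in> cone d p)"

definition goodp :: "nat \<Rightarrow> nat list set \<Rightarrow> (nat list \<Rightarrow> nat list) \<Rightarrow> bool" where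
  "goodp d P \<sigma> \<longleftrightarrow> ppart d P \<and> ppart d (\<sigma>`P) \<and> inj_on \<sigma> P \<and>
    (\<forall>p\<in>P. \<forall>p'\<in>P. \<forall>\<rho>\<in>bdry d. \<forall>\<rho>'\<in>bdry d. p \<noteq> p' \<longrightarrow>
       lex_less (hcone p \<rho>) (hcone p' \<rho>') \<longrightarrow> lex_less (hcone (\<sigma> p) \<rho>) (hcone (\<sigma> p') \<rho>'))"

definition pmap :: "nat \<Rightarrow> nat list set \<Rightarrow> (nat list \<Rightarrow> nat list) \<Rightarrow> (nat \<Rightarrow> nat) \<Rightarrow> (nat \<Rightarrow> nat)" where
  "pmap d P \<sigma> = (\<lambda>\<kappa>\<in>bdry d. hcone (\<sigma> (THE p. p \<in> P \<and> \<kappa> \<in> cone d p))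
       (shiftn (length (THE p. p \<in> P \<and> \<kappa> \<in> cone d p)) \<kappa>))"

lemma ppart_the: "ppart d P \<Longrightarrow> p \<in> P \<Longrightarrow> \<kappa> \<in> cone d p \<Longrightarrow> (THE p. p \<in> P \<and> \<kappa> \<in> cone d p) = p"
proof -
  assume a: "ppart d P" "p \<in> P" "\<kappa> \<in> cone d p"
  then have "\<kappa> \<in> bdry d" using cone_sub_bdry by blast
  then have "\<exists>!p. p \<in> P \<and> \<kappa> \<in> cone d p" using a(1) unfolding ppart_def by blast
  then show ?thesis using a by (intro the1_equality) auto
qed

lemma ppart_uniq: "ppart d P \<Longrightarrow> p \<in> P \<Longrightarrow> p' \<in> P \<Longrightarrow> \<kappa> \<in> cone d p \<Longrightarrow> \<kappa> \<in> cone d p' \<Longrightarrow> p = p'"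
proof -
  assume a: "ppart d P" "p \<in> P" "p' \<in> P" "\<kappa> \<in> cone d p" "\<kappa> \<in> cone d p'"
  have "(THE p. p \<in> P \<and> \<kappa> \<in> cone d p) = p" by (rule ppart_the[OF a(1,2,4)])
  moreover have "(THE p. p \<in> P \<and> \<kappa> \<in> cone d p) = p'" by (rule ppart_the[OF a(1,3,5)])
  ultimately show ?thesis by simp
qed

lemma ppart_words: "ppart d P \<Longrightarrow> p \<in> P \<Longrightarrow> p \<in> words d"
  unfolding ppart_def by blast

lemma ppart_ex: "ppart d P \<Longrightarrow> \<kappa> \<in> bdry d \<Longrightarrow> \<exists>p\<in>P. \<kappa> \<in> cone d p"
  unfolding ppart_def by blast

lemma ppart_obtain: "ppart d P \<Longrightarrow> \<kappa> \<in> bdry d \<Longrightarrow> \<exists>p\<in>P. \<exists>\<rho>\<in>bdry d. \<kappa> = hcone p \<rho>"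
proof -
  assume a: "ppart d P" "\<kappa> \<in> bdry d"
  then obtain p where p: "p \<in> P" "\<kappa> \<in> cone d p" using ppart_ex by blast
  then have "\<kappa> = hcone p (shiftn (length p) \<kappa>)" using cone_hcone_eq by metis
  then show ?thesis using p a(2) bdry_shiftn by blast
qed

lemma pmap_hcone: "ppart d P \<Longrightarrow> p \<in> P \<Longrightarrow> \<rho> \<in> bdry d \<Longrightarrow> pmap d P \<sigma> (hcone p \<rho>) = hcone (\<sigma> p) \<rho>"
proof -
  assume a: "ppart d P" "p \<in> P" "\<rho> \<in> bdry d"
  have c: "hcone p \<rho> \<in> cone d p" using a by (simp add: hcone_in_cone ppart_words)
  then have "hcone p \<rho> \<in> bdry d" using cone_sub_bdry by blast
  then show ?thesis unfolding pmap_def using ppart_the[OF a(1,2) c] by simp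
qed

lemma pmap_Bij: assumes g: "goodp d P \<sigma>" shows "pmap d P \<sigma> \<in> Bij (bdry d)"
proof -
  let ?f = "pmap d P \<sigma>"
  have P: "ppart d P" and Q: "ppart d (\<sigma>`P)" and inj: "inj_on \<sigma> P" using g goodp_def by auto
  have ext: "?f \<in> extensional (bdry d)" unfolding pmap_def by simp
  have into: "?f \<kappa> \<in> bdry d" if k0: "\<kappa> \<in> bdry d" for \<kappa>
  proof -
    obtain p \<rho> where "p \<in> P" "\<rho> \<in> bdry d" "\<kappa> = hcone p \<rho>" using ppart_obtain[OF P k0] by blast
    then show ?thesis using pmap_hcone[OF P] hcone_bdry ppart_words[OF Q] by auto
  qed
  have injf: "inj_on ?f (bdry d)"
  proof
    fix \<kappa> \<mu> assume k: "\<kappa> \<in> bdry d" and m: "\<mu> \<in> bdry d" and e: "?f \<kappa> = ?f \<mu>"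
    obtain p \<rho> where p: "p \<in> P" "\<rho> \<in> bdry d" "\<kappa> = hcone p \<rho>" using ppart_obtain[OF P k] by blast
    obtain p' \<rho>' where p': "p' \<in> P" "\<rho>' \<in> bdry d" "\<mu> = hcone p' \<rho>'" using ppart_obtain[OF P m] by blast
    have e2: "hcone (\<sigma> p) \<rho> = hcone (\<sigma> p') \<rho>'" using e p p' pmap_hcone[OF P] by simp
    have w1: "\<sigma> p \<in> words d" "\<sigma> p' \<in> words d" using p p' ppart_words[OF Q] by auto
    have "\<sigma> p = \<sigma> p'"
      using ppart_uniq[OF Q _ _ hcone_in_cone[OF w1(1) p(2)]] hcone_in_cone[OF w1(2) p'(2)] e2 p p'
      by (metis imageI)
    then have "p = p'" using inj p p' by (meson inj_onD)
    then show "\<kappa> = \<mu>" using e2 p p' \<open>\<sigma> p = \<sigma> p'\<close> hcone_inj by metis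
  qed
  have surj: "?f ` bdry d = bdry d"
  proof
    show "?f ` bdry d \<subseteq> bdry d" using into by blast
    show "bdry d \<subseteq> ?f ` bdry d"
    proof
      fix \<mu> assume m: "\<mu> \<in> bdry d"
      obtain q \<rho> where q: "q \<in> \<sigma>`P" "\<rho> \<in> bdry d" "\<mu> = hcone q \<rho>" using ppart_obtain[OF Q m] by blast
      then obtain p where p: "p \<in> P" "q = \<sigma> p" by blast
      have "hcone p \<rho> \<in> bdry d" using hcone_bdry ppart_words[OF P p(1)] q(2) by blast
      moreover have "?f (hcone p \<rho>) = \<mu>" using pmap_hcone[OF P p(1) q(2)] p q by simp
      ultimately show "\<mu> \<in> ?f ` bdry d" by blast
    qed
  qed
  show ?thesis unfolding Bij_def bij_betw_def using ext injf surj by blast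
qed

lemma pmap_lex: assumes g: "goodp d P \<sigma>" and k: "\<kappa> \<in> bdry d" and m: "\<mu> \<in> bdry d"
  and l: "lex_less \<kappa> \<mu>" shows "lex_less (pmap d P \<sigma> \<kappa>) (pmap d P \<sigma> \<mu>)"
proof -
  have P: "ppart d P" using g goodp_def by auto
  obtain p \<rho> where p: "p \<in> P" "\<rho> \<in> bdry d" "\<kappa> = hcone p \<rho>" using ppart_obtain[OF P k] by blast
  obtain p' \<rho>' where p': "p' \<in> P" "\<rho>' \<in> bdry d" "\<mu> = hcone p' \<rho>'" using ppart_obtain[OF P m] by blast
  show ?thesis
  proof (cases "p = p'")
    case True
    then show ?thesis using l p p' pmap_hcone[OF P] lex_hcone by simp
  next
    case False
    then show ?thesis using g[unfolded goodp_def] l p p' pmap_hcone[OF P] by simp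
  qed
qed

lemma one_AutT: "\<one>\<^bsub>AutT d\<^esub> = (\<lambda>x\<in>words d. x)"
  by (simp add: AutT_def BijGroup_def)

lemma bact_one: "\<rho> \<in> bdry d \<Longrightarrow> bact (\<one>\<^bsub>AutT d\<^esub>) \<rho> = \<rho>"
proof (rule ext)
  fix n assume "\<rho> \<in> bdry d"
  then have "map \<rho> [0..<Suc n] \<in> words d" by (auto simp: words_def bdry_def)
  then show "bact (\<one>\<^bsub>AutT d\<^esub>) \<rho> n = \<rho> n" unfolding bact_def one_AutT
    by (simp del: upt_Suc)
qed

lemma ppart_cone_partition: assumes Q: "ppart d Q" and h: "bij_betw h {..<n} Q"
  shows "cone_partition d n h"
proof -
  have w: "\<forall>i<n. h i \<in> words d" using h ppart_words[OF Q] bij_betw_apply by fastforce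
  have dj: "\<forall>i<n. \<forall>j<n. i \<noteq> j \<longrightarrow> cone d (h i) \<inter> cone d (h j) = {}"
  proof (intro allI impI)
    fix i j assume "i < n" "j < n" "i \<noteq> j"
    then have "h i \<noteq> h j" "h i \<in> Q" "h j \<in> Q" using h unfolding bij_betw_def inj_on_def by auto
    then show "cone d (h i) \<inter> cone d (h j) = {}" using ppart_uniq[OF Q] by blast
  qed
  have cv: "(\<Union>i<n. cone d (h i)) = bdry d"
  proof
    show "(\<Union>i<n. cone d (h i)) \<subseteq> bdry d" using cone_sub_bdry by blast
    show "bdry d \<subseteq> (\<Union>i<n. cone d (h i))"
    proof
      fix \<kappa> assume "\<kappa> \<in> bdry d"
      then obtain q where "q \<in> Q" "\<kappa> \<in> cone d q" using ppart_ex[OF Q] by blast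
      then obtain i where "i < n" "h i = q" using h unfolding bij_betw_def by auto
      then show "\<kappa> \<in> (\<Union>i<n. cone d (h i))" using \<open>\<kappa> \<in> cone d q\<close> by blast
    qed
  qed
  show ?thesis unfolding cone_partition_def using w dj cv by blast
qed

lemma pmap_VdG: assumes g: "goodp d P \<sigma>" and one: "\<one>\<^bsub>AutT d\<^esub> \<in> H"
  shows "pmap d P \<sigma> \<in> VdG d H"
proof -
  have P: "ppart d P" and Q: "ppart d (\<sigma>`P)" and inj: "inj_on \<sigma> P" using g goodp_def by auto
  have fin: "finite P" using P unfolding ppart_def by simp
  obtain e where e0: "bij_betw e {0..<card P} P" using ex_bij_betw_nat_finite[OF fin] by blast
  define n where "n = card P"
  have e: "bij_betw e {..<n} P" using e0 n_def by (simp add: lessThan_atLeast0)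
  have e2: "bij_betw (\<sigma> \<circ> e) {..<n} (\<sigma>`P)"
    using bij_betw_trans[OF e inj_on_imp_bij_betw[OF inj]] by simp
  have c1: "cone_partition d n e" by (rule ppart_cone_partition[OF P e])
  have c2: "cone_partition d n (\<sigma> \<circ> e)" by (rule ppart_cone_partition[OF Q e2])
  have act: "\<forall>i<n. \<forall>\<kappa>\<in>bdry d. pmap d P \<sigma> (hcone (e i) \<kappa>) = hcone ((\<sigma> \<circ> e) (id i)) (bact (\<one>\<^bsub>AutT d\<^esub>) \<kappa>)"
    using pmap_hcone[OF P] bact_one e bij_betw_apply by fastforce
  show ?thesis unfolding VdG_def
    using pmap_Bij[OF g] c1 c2 act one
    by (intro CollectI conjI, simp, intro exI[of _ n] exI[of _ e] exI[of _ "\<sigma> \<circ> e"] exI[of _ id]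
        exI[of _ "\<lambda>_. \<one>\<^bsub>AutT d\<^esub>"]) (simp add: bij_betw_id)
qed

lemma pmap_Fd: "goodp d P \<sigma> \<Longrightarrow> pmap d P \<sigma> \<in> Fd d"
  unfolding Fd_def using pmap_VdG[of d P \<sigma> "{\<one>\<^bsub>AutT d\<^esub>}"] pmap_lex by blast



definition ext :: "nat \<Rightarrow> nat \<Rightarrow> nat list set \<Rightarrow> nat list set" where
  "ext d a P = (\<lambda>i. [i]) ` ({1..d} - {a}) \<union> Cons a ` P"

definition lift :: "nat \<Rightarrow> (nat list \<Rightarrow> nat list) \<Rightarrow> (nat list \<Rightarrow> nat list)" where
  "lift a \<sigma> = (\<lambda>p. case p of [] \<Rightarrow> [] | b#r \<Rightarrow> if b = a then a # \<sigma> r else p)"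

lemma lift_single[simp]: "i \<noteq> a \<Longrightarrow> lift a \<sigma> [i] = [i]" by (simp add: lift_def)
lemma lift_Cons[simp]: "lift a \<sigma> (a#r) = a # \<sigma> r" by (simp add: lift_def)

lemma cone_single: "\<kappa> \<in> cone d [i] \<longleftrightarrow> \<kappa> \<in> bdry d \<and> \<kappa> 0 = i"
  by (auto simp: cone_Cons bdry_stl)

lemma ppart_ext: assumes P: "ppart d P" and a: "a \<in> {1..d}" shows "ppart d (ext d a P)"
proof -
  have fin: "finite (ext d a P)" using P unfolding ext_def ppart_def by simp
  have w1: "(\<lambda>i. [i]) ` ({1..d} - {a}) \<subseteq> words d" by (auto simp: words_def)
  have w2: "Cons a ` P \<subseteq> words d" using ppart_words[OF P] a by (auto simp: words_Cons)
  have w: "ext d a P \<subseteq> words d" using w1 w2 unfolding ext_def by blast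
  have ex: "\<exists>q. q \<in> ext d a P \<and> \<kappa> \<in> cone d q" if k: "\<kappa> \<in> bdry d" for \<kappa>
  proof (cases "\<kappa> 0 = a")
    case True
    obtain p where "p \<in> P" "stl \<kappa> \<in> cone d p" using ppart_ex[OF P bdry_stl[OF k]] by blast
    then show ?thesis using True k by (intro exI[of _ "a#p"]) (auto simp: ext_def cone_Cons)
  next
    case False
    have "\<kappa> 0 \<in> {1..d}" using k unfolding bdry_def by blast
    then show ?thesis using False k by (intro exI[of _ "[\<kappa> 0]"]) (auto simp: ext_def cone_single)
  qed
  have un: "q = q'" if hq: "q \<in> ext d a P" "q' \<in> ext d a P" "\<kappa> \<in> cone d q" "\<kappa> \<in> cone d q'" for q q' \<kappa>
  proof -
    have c: "(\<exists>i. q = [i] \<and> i \<noteq> a \<and> \<kappa> 0 = i) \<or> (\<exists>p\<in>P. q = a#p \<and> \<kappa> 0 = a \<and> stl \<kappa> \<in> cone d p)"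
      if "q \<in> ext d a P" "\<kappa> \<in> cone d q" for q
      using that unfolding ext_def by (auto simp: cone_single cone_Cons)
    from c[OF hq(1,3)] c[OF hq(2,4)] show ?thesis
    proof (elim disjE exE bexE conjE)
      fix p p' assume "p \<in> P" "q = a # p" "stl \<kappa> \<in> cone d p" "p' \<in> P" "q' = a # p'" "stl \<kappa> \<in> cone d p'"
      then show ?thesis using ppart_uniq[OF P] by blast
    qed auto
  qed
  show ?thesis unfolding ppart_def using fin w ex un by metis
qed

lemma lift_image: "lift a \<sigma> ` ext d a P = ext d a (\<sigma> ` P)"
  unfolding ext_def by (auto simp: image_image image_Un)

lemma lift_inj: assumes "inj_on \<sigma> P" shows "inj_on (lift a \<sigma>) (ext d a P)"
proof (rule inj_onI)
  fix x y assume x: "x \<in> ext d a P" and y: "y \<in> ext d a P" and e: "lift a \<sigma> x = lift a \<sigma> y"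
  have c: "(\<exists>i. x = [i] \<and> i \<noteq> a) \<or> (\<exists>p\<in>P. x = a#p)" if "x \<in> ext d a P" for x
    using that unfolding ext_def by blast
  from c[OF x] c[OF y] show "x = y"
  proof (elim disjE exE bexE conjE)
    fix p p' assume "p \<in> P" "x = a # p" "p' \<in> P" "y = a # p'"
    then show ?thesis using e assms inj_onD by fastforce
  next
    fix i p assume "x = [i]" "i \<noteq> a" "y = a#p"
    then show ?thesis using e by simp
  next
    fix i p assume "y = [i]" "i \<noteq> a" "x = a#p"
    then show ?thesis using e by simp
  qed (use e in simp)
qed

lemma goodp_ext: assumes g: "goodp d P \<sigma>" and a: "a \<in> {1..d}" shows "goodp d (ext d a P) (lift a \<sigma>)"
proof -
  have P: "ppart d P" and Q: "ppart d (\<sigma>`P)" and inj: "inj_on \<sigma> P"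
   and ord: "\<forall>p\<in>P. \<forall>p'\<in>P. \<forall>\<rho>\<in>bdry d. \<forall>\<rho>'\<in>bdry d. p \<noteq> p' \<longrightarrow>
       lex_less (hcone p \<rho>) (hcone p' \<rho>') \<longrightarrow> lex_less (hcone (\<sigma> p) \<rho>) (hcone (\<sigma> p') \<rho>')"
    using g goodp_def by auto
  have o: "lex_less (hcone (lift a \<sigma> p) \<rho>) (hcone (lift a \<sigma> p') \<rho>')"
    if "p \<in> ext d a P" "p' \<in> ext d a P" "\<rho> \<in> bdry d" "\<rho>' \<in> bdry d" "p \<noteq> p'"
       "lex_less (hcone p \<rho>) (hcone p' \<rho>')" for p p' \<rho> \<rho>'
  proof -
    have c: "(\<exists>i. x = [i] \<and> i \<noteq> a) \<or> (\<exists>r\<in>P. x = a#r)" if "x \<in> ext d a P" for x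
      using that unfolding ext_def by blast
    from c[OF that(1)] c[OF that(2)] show ?thesis
    proof (elim disjE exE bexE conjE)
      fix r r' assume r: "r \<in> P" "p = a # r" "r' \<in> P" "p' = a # r'"
      then have "r \<noteq> r'" using that(5) by blast
      moreover have "lex_less (hcone r \<rho>) (hcone r' \<rho>')" using that(6) r by (simp add: hcone_Cons lex_scons)
      ultimately have "lex_less (hcone (\<sigma> r) \<rho>) (hcone (\<sigma> r') \<rho>')" using ord r that(3,4) by blast
      then show ?thesis using r by (simp add: hcone_Cons lex_scons)
    qed (use that(6) in \<open>auto simp: hcone_Cons lex_scons\<close>)
  qed
  show ?thesis unfolding goodp_def
    using ppart_ext[OF P a] ppart_ext[OF Q a] lift_image[of a \<sigma> d P] lift_inj[OF inj] o by simp
qed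

lemma pmap_ext: assumes P: "ppart d P" and a: "a \<in> {1..d}" and k: "\<kappa> \<in> bdry d"
  shows "pmap d (ext d a P) (lift a \<sigma>) \<kappa> = (if \<kappa> 0 = a then scons a (pmap d P \<sigma> (stl \<kappa>)) else \<kappa>)"
proof (cases "\<kappa> 0 = a")
  case True
  obtain p \<rho> where p: "p \<in> P" "\<rho> \<in> bdry d" "stl \<kappa> = hcone p \<rho>" using ppart_obtain[OF P bdry_stl[OF k]] by blast
  have "\<kappa> = hcone (a#p) \<rho>" using p True by (metis hcone_Cons scons_stl)
  moreover have "a#p \<in> ext d a P" using p unfolding ext_def by blast
  then have "pmap d (ext d a P) (lift a \<sigma>) (hcone (a#p) \<rho>) = hcone (lift a \<sigma> (a#p)) \<rho>"
    using pmap_hcone[OF ppart_ext[OF P a] _ p(2)] by blast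
  ultimately show ?thesis using True p pmap_hcone[OF P]
    by (simp add: hcone_Cons)
next
  case False
  have k0: "\<kappa> 0 \<in> {1..d}" using k unfolding bdry_def by blast
  have "\<kappa> = hcone [\<kappa> 0] (stl \<kappa>)" by (simp add: hcone_Cons scons_stl)
  moreover have "[\<kappa> 0] \<in> ext d a P" using k0 False unfolding ext_def by blast
  ultimately show ?thesis using False pmap_hcone[OF ppart_ext[OF P a] _ bdry_stl[OF k]]
    by (metis lift_single)
qed

fun extw :: "nat \<Rightarrow> nat list \<Rightarrow> nat list set \<Rightarrow> nat list set" where
  "extw d [] P = P"
| "extw d (a#u) P = ext d a (extw d u P)"

fun liftw :: "nat list \<Rightarrow> (nat list \<Rightarrow> nat list) \<Rightarrow> (nat list \<Rightarrow> nat list)" where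
  "liftw [] \<sigma> = \<sigma>"
| "liftw (a#u) \<sigma> = lift a (liftw u \<sigma>)"

lemma goodp_extw: "goodp d P \<sigma> \<Longrightarrow> u \<in> words d \<Longrightarrow> goodp d (extw d u P) (liftw u \<sigma>)"
  by (induction u) (auto simp: words_Cons goodp_ext)

definition E :: "nat \<Rightarrow> nat list \<Rightarrow> nat list set \<Rightarrow> (nat list \<Rightarrow> nat list) \<Rightarrow> (nat \<Rightarrow> nat) \<Rightarrow> (nat \<Rightarrow> nat)" where
  "E d u P \<sigma> = pmap d (extw d u P) (liftw u \<sigma>)"

lemma E_Cons: assumes g: "goodp d P \<sigma>" and a: "a \<in> {1..d}" and u: "u \<in> words d" and k: "\<kappa> \<in> bdry d"
  shows "E d (a#u) P \<sigma> \<kappa> = (if \<kappa> 0 = a then scons a (E d u P \<sigma> (stl \<kappa>)) else \<kappa>)"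
  using pmap_ext[OF _ a k] goodp_extw[OF g u] unfolding E_def goodp_def by simp

lemma E_out: "goodp d P \<sigma> \<Longrightarrow> u \<in> words d \<Longrightarrow> \<kappa> \<in> bdry d \<Longrightarrow> \<kappa> \<notin> cone d u \<Longrightarrow> E d u P \<sigma> \<kappa> = \<kappa>"
proof (induction u arbitrary: \<kappa>)
  case Nil then show ?case by simp
next
  case (Cons a u)
  have a: "a \<in> {1..d}" and u: "u \<in> words d" using Cons.prems words_Cons by auto
  show ?case
  proof (cases "\<kappa> 0 = a")
    case True
    then have "stl \<kappa> \<notin> cone d u" using Cons.prems cone_Cons by blast
    then have "E d u P \<sigma> (stl \<kappa>) = stl \<kappa>" using Cons bdry_stl u by blast
    then show ?thesis using E_Cons[OF Cons.prems(1) a u Cons.prems(3)] True scons_stl by metis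
  next
    case False then show ?thesis using E_Cons[OF Cons.prems(1) a u Cons.prems(3)] by simp
  qed
qed

lemma E_in: "goodp d P \<sigma> \<Longrightarrow> u \<in> words d \<Longrightarrow> \<rho> \<in> bdry d \<Longrightarrow> E d u P \<sigma> (hcone u \<rho>) = hcone u (pmap d P \<sigma> \<rho>)"
proof (induction u)
  case Nil then show ?case by (simp add: E_def)
next
  case (Cons a u)
  have a: "a \<in> {1..d}" and u: "u \<in> words d" using Cons.prems words_Cons by auto
  have b: "hcone (a#u) \<rho> \<in> bdry d" using hcone_bdry Cons.prems by blast
  show ?case using E_Cons[OF Cons.prems(1) a u b] Cons u by (simp add: hcone_Cons)
qed

lemma E_Fd: "goodp d P \<sigma> \<Longrightarrow> u \<in> words d \<Longrightarrow> E d u P \<sigma> \<in> Fd d"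
  unfolding E_def by (rule pmap_Fd[OF goodp_extw])

lemma E_Bij: "goodp d P \<sigma> \<Longrightarrow> u \<in> words d \<Longrightarrow> E d u P \<sigma> \<in> Bij (bdry d)"
  unfolding E_def by (rule pmap_Bij[OF goodp_extw])



definition PT :: "nat \<Rightarrow> nat list set" where
  "PT d = ext d 2 (ext d 1 {[]})"

definition \<sigma>T :: "nat \<Rightarrow> nat list \<Rightarrow> nat list" where
  "\<sigma>T d p = (if p = [1] then [1,1] else if length p = 2 then (if p!1 < d then [1, Suc (p!1)] else [2]) else p)"

lemma ppart_root: "ppart d {[]}"
  unfolding ppart_def by (auto simp: words_def)

lemma L1_char: "p \<in> ext d a {[]} \<longleftrightarrow> (\<exists>i\<in>{1..d}. p = [i]) \<or> (p = [a])"
  unfolding ext_def by auto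

lemma PT_char: "d \<ge> 2 \<Longrightarrow> p \<in> PT d \<longleftrightarrow> (\<exists>i\<in>{1..d}. i \<noteq> 2 \<and> p = [i]) \<or> (\<exists>i\<in>{1..d}. p = [2,i])"
  unfolding PT_def ext_def by auto

lemma QT_char: "d \<ge> 2 \<Longrightarrow> p \<in> ext d 1 (ext d 1 {[]}) \<longleftrightarrow> (\<exists>i\<in>{1..d}. i \<noteq> 1 \<and> p = [i]) \<or> (\<exists>i\<in>{1..d}. p = [1,i])"
  unfolding ext_def by auto

lemma \<sigma>T_single: "i \<noteq> 1 \<Longrightarrow> \<sigma>T d [i] = [i]" by (simp add: \<sigma>T_def)
lemma \<sigma>T_one: "\<sigma>T d [1] = [1,1]" by (simp add: \<sigma>T_def)
lemma \<sigma>T_two: "\<sigma>T d [2,i] = (if i < d then [1, Suc i] else [2])" by (simp add: \<sigma>T_def)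

lemma \<sigma>T_image: assumes d: "d \<ge> 2" shows "\<sigma>T d ` PT d = ext d 1 (ext d 1 {[]})"
proof
  show "\<sigma>T d ` PT d \<subseteq> ext d 1 (ext d 1 {[]})"
  proof
    fix q assume "q \<in> \<sigma>T d ` PT d"
    then obtain p where p: "p \<in> PT d" "q = \<sigma>T d p" by blast
    from p(1)[unfolded PT_char[OF d]] show "q \<in> ext d 1 (ext d 1 {[]})"
    proof (elim disjE bexE conjE)
      fix i assume i: "i \<in> {1..d}" "i \<noteq> 2" "p = [i]"
      show ?thesis
      proof (cases "i = 1")
        case True
        then have "q = [1,1]" using i p by (simp add: \<sigma>T_def)
        moreover have "[1,1] \<in> ext d 1 (ext d 1 {[]})" unfolding ext_def using d by auto
        ultimately show ?thesis by simp
      next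
        case False then show ?thesis using i p d by (auto simp: \<sigma>T_single ext_def)
      qed
    next
      fix i assume i: "i \<in> {1..d}" "p = [2,i]"
      then show ?thesis using p d by (auto simp: \<sigma>T_two ext_def)
    qed
  qed
  show "ext d 1 (ext d 1 {[]}) \<subseteq> \<sigma>T d ` PT d"
  proof
    fix q assume "q \<in> ext d 1 (ext d 1 {[]})"
    from this[unfolded QT_char[OF d]] show "q \<in> \<sigma>T d ` PT d"
    proof (elim disjE bexE conjE)
      fix i assume i: "i \<in> {1..d}" "i \<noteq> 1" "q = [i]"
      show ?thesis
      proof (cases "i = 2")
        case True
        then have "q = \<sigma>T d [2,d]" "[2,d] \<in> PT d" using i d by (auto simp: \<sigma>T_two PT_char)
        then show ?thesis by blast
      next
        case False
        then have "q = \<sigma>T d [i]" "[i] \<in> PT d" using i d by (auto simp: \<sigma>T_single PT_char)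
        then show ?thesis by blast
      qed
    next
      fix i assume i: "i \<in> {1..d}" "q = [1,i]"
      show ?thesis
      proof (cases "i = 1")
        case True
        then have "q = \<sigma>T d [1]" "[1] \<in> PT d" using i d by (auto simp: \<sigma>T_def PT_char)
        then show ?thesis by blast
      next
        case False
        then have "q = \<sigma>T d [2, i - 1]" "[2, i - 1] \<in> PT d" using i d by (auto simp: \<sigma>T_two PT_char)
        then show ?thesis by blast
      qed
    qed
  qed
qed

lemma \<sigma>T_inj: assumes d: "d \<ge> 2" shows "inj_on (\<sigma>T d) (PT d)"
proof (rule inj_onI)
  fix x y assume x: "x \<in> PT d" and y: "y \<in> PT d" and e: "\<sigma>T d x = \<sigma>T d y"
  from x[unfolded PT_char[OF d]] y[unfolded PT_char[OF d]] show "x = y"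
    using e by (auto simp: \<sigma>T_def split: if_splits)
qed

lemma \<sigma>T_ord: assumes d: "d \<ge> 2" and p: "p \<in> PT d" and p': "p' \<in> PT d"
  and l: "lex_less (hcone p \<rho>) (hcone p' \<rho>')"
  shows "lex_less (hcone (\<sigma>T d p) \<rho>) (hcone (\<sigma>T d p') \<rho>')"
proof -
  from p[unfolded PT_char[OF d]] p'[unfolded PT_char[OF d]] show ?thesis
  proof (elim disjE bexE conjE)
    fix i j assume "i \<in> {1..d}" "i \<noteq> 2" "p = [i]" "j \<in> {1..d}" "j \<noteq> 2" "p' = [j]"
    then show ?thesis using l by (auto simp: \<sigma>T_def hcone_Cons lex_scons)
  next
    fix i j assume "i \<in> {1..d}" "i \<noteq> 2" "p = [i]" "j \<in> {1..d}" "p' = [2,j]"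
    then show ?thesis using l by (auto simp: \<sigma>T_def hcone_Cons lex_scons)
  next
    fix i j assume "i \<in> {1..d}" "p = [2,i]" "j \<in> {1..d}" "j \<noteq> 2" "p' = [j]"
    then show ?thesis using l by (auto simp: \<sigma>T_def hcone_Cons lex_scons)
  next
    fix i j assume "i \<in> {1..d}" "p = [2,i]" "j \<in> {1..d}" "p' = [2,j]"
    then show ?thesis using l by (auto simp: \<sigma>T_def hcone_Cons lex_scons)
  qed
qed

lemma goodT: assumes d: "d \<ge> 2" shows "goodp d (PT d) (\<sigma>T d)"
proof -
  have o1: "(1::nat) \<in> {1..d}" "(2::nat) \<in> {1..d}" using d by auto
  have P: "ppart d (PT d)" unfolding PT_def using ppart_ext ppart_root o1 by blast
  have Q: "ppart d (\<sigma>T d ` PT d)" unfolding \<sigma>T_image[OF d] using ppart_ext ppart_root o1 by blast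
  show ?thesis unfolding goodp_def using P Q \<sigma>T_inj[OF d] \<sigma>T_ord[OF d] by blast
qed



lemma bcarrier: "carrier (BijGroup S) = Bij S" by (simp add: BijGroup_def)

lemma bmult: "f \<in> Bij S \<Longrightarrow> g \<in> Bij S \<Longrightarrow> z \<in> S \<Longrightarrow> (f \<otimes>\<^bsub>BijGroup S\<^esub> g) z = f (g z)"
  by (simp add: BijGroup_def compose_def)

lemma Bij_in: "f \<in> Bij S \<Longrightarrow> z \<in> S \<Longrightarrow> f z \<in> S"
  using Bij_imp_funcset by blast

lemma Bij_inj: "f \<in> Bij S \<Longrightarrow> inj_on f S"
  by (simp add: Bij_def bij_betw_def)

lemma binv_eq: "f \<in> Bij S \<Longrightarrow> y \<in> S \<Longrightarrow> f y = z \<Longrightarrow> (inv\<^bsub>BijGroup S\<^esub> f) z = y"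
proof -
  assume a: "f \<in> Bij S" "y \<in> S" "f y = z"
  have "z \<in> S" using Bij_in[OF a(1) a(2)] a(3) by simp
  have e: "inv\<^bsub>BijGroup S\<^esub> f = (\<lambda>x\<in>S. inv_into S f x)" by (rule inv_BijGroup[OF a(1)])
  have "(inv\<^bsub>BijGroup S\<^esub> f) z = inv_into S f z" unfolding e using \<open>z \<in> S\<close> by simp
  also have "\<dots> = y" by (rule inv_into_f_eq[OF Bij_inj[OF a(1)] a(2,3)])
  finally show ?thesis .
qed

lemma binv_Bij: "f \<in> Bij S \<Longrightarrow> inv\<^bsub>BijGroup S\<^esub> f \<in> Bij S"
  using group.inv_closed[OF group_BijGroup] bcarrier by metis

lemma bmult_Bij: "f \<in> Bij S \<Longrightarrow> g \<in> Bij S \<Longrightarrow> f \<otimes>\<^bsub>BijGroup S\<^esub> g \<in> Bij S"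
  using monoid.m_closed[OF group.is_monoid[OF group_BijGroup]] bcarrier by metis

lemma comm_exists:
  assumes d: "d \<ge> 2" and u: "u \<in> words d"
  shows "\<exists>c. c \<in> derived_set (BdryGroup d) (Fd d) \<and> c \<in> Bij (bdry d) \<and>
     (\<forall>\<mu>\<in>bdry d. \<mu> \<notin> cone d u \<longrightarrow> c \<mu> = \<mu>) \<and> (\<exists>\<pi>\<in>cone d u. c \<pi> \<noteq> \<pi>)"
proof -
  let ?S = "bdry d"
  let ?G = "BdryGroup d"
  have g: "goodp d (PT d) (\<sigma>T d)" by (rule goodT[OF d])
  have Pp: "ppart d (PT d)" using g unfolding goodp_def by blast
  have u1: "u @ [1] \<in> words d" using u d by (simp add: words_append words_def)
  define a where "a = E d u (PT d) (\<sigma>T d)"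
  define b where "b = E d (u@[1]) (PT d) (\<sigma>T d)"
  have aF: "a \<in> Fd d" and bF: "b \<in> Fd d" unfolding a_def b_def using E_Fd[OF g] u u1 by auto
  have aB: "a \<in> Bij ?S" and bB: "b \<in> Bij ?S" unfolding a_def b_def using E_Bij[OF g] u u1 by auto
  define \<rho>0 :: "nat \<Rightarrow> nat" where "\<rho>0 = (\<lambda>_. 1)"
  have r0: "\<rho>0 \<in> ?S" unfolding \<rho>0_def bdry_def using d by simp
  have w21: "[2,1] \<in> words d" "[1] \<in> words d" using d by (auto simp: words_def)
  have in21: "[2,1] \<in> PT d" using d by (simp add: PT_char)
  have s21: "\<sigma>T d [2,1] = [1,2]" using d by (simp add: \<sigma>T_def)
  define \<kappa> where "\<kappa> = hcone (u@[1]) (hcone [2,1] \<rho>0)"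
  have r1: "hcone [2,1] \<rho>0 \<in> ?S" using hcone_bdry w21 r0 by blast
  have r2: "hcone [2,1] (hcone [1] \<rho>0) \<in> ?S" using hcone_bdry w21 r0 by blast
  have k: "\<kappa> \<in> ?S" unfolding \<kappa>_def using hcone_bdry u1 r1 by blast
  have bk: "b \<kappa> = hcone (u@[1]) (hcone [1,2] \<rho>0)"
  proof -
    have "b \<kappa> = hcone (u@[1]) (pmap d (PT d) (\<sigma>T d) (hcone [2,1] \<rho>0))"
      unfolding b_def \<kappa>_def by (rule E_in[OF g u1 r1])
    also have "pmap d (PT d) (\<sigma>T d) (hcone [2,1] \<rho>0) = hcone [1,2] \<rho>0"
      using pmap_hcone[OF Pp in21 r0] s21 by simp
    finally show ?thesis .
  qed
  have bkk: "b \<kappa> \<noteq> \<kappa>"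
  proof
    assume h: "b \<kappa> = \<kappa>"
    have "hcone (u@[1]) (hcone [1,2] \<rho>0) = hcone (u@[1]) (hcone [2,1] \<rho>0)" using h bk unfolding \<kappa>_def by simp
    then have "hcone [1,2] \<rho>0 = hcone [2,1] \<rho>0" by (rule hcone_inj)
    then have "hcone [1,2] \<rho>0 0 = hcone [2,1] \<rho>0 0" by simp
    then show False by (simp add: hcone_Cons)
  qed
  define \<nu> where "\<nu> = hcone u (hcone [2,1] (hcone [1] \<rho>0))"
  have nu: "\<nu> \<in> ?S" unfolding \<nu>_def using hcone_bdry u r2 by blast
  have anu: "a \<nu> = \<kappa>"
  proof -
    have "a \<nu> = hcone u (pmap d (PT d) (\<sigma>T d) (hcone [2,1] (hcone [1] \<rho>0)))"
      unfolding a_def \<nu>_def using E_in[OF g u r2] by simp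
    also have "\<dots> = hcone u (hcone [1,2] (hcone [1] \<rho>0))"
      using pmap_hcone[OF Pp in21 hcone_bdry[OF w21(2) r0]] s21 by simp
    also have "\<dots> = \<kappa>" unfolding \<kappa>_def hcone_append by (simp add: hcone_Cons)
    finally show ?thesis .
  qed
  have nu_out: "\<nu> \<notin> cone d (u@[1])"
  proof
    assume "\<nu> \<in> cone d (u@[1])"
    then have "\<nu> (length u) = (u@[1]) ! length u" unfolding cone_iff by simp
    moreover have "\<nu> (length u) = 2" unfolding \<nu>_def by (simp add: hcone_def)
    ultimately show False by simp
  qed
  have bnu: "b \<nu> = \<nu>" unfolding b_def using E_out[OF g u1 nu nu_out] .
  define c where "c = a \<otimes>\<^bsub>?G\<^esub> b \<otimes>\<^bsub>?G\<^esub> (inv\<^bsub>?G\<^esub> a) \<otimes>\<^bsub>?G\<^esub> (inv\<^bsub>?G\<^esub> b)"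
  have iaB: "(inv\<^bsub>?G\<^esub> a) \<in> Bij ?S" and ibB: "(inv\<^bsub>?G\<^esub> b) \<in> Bij ?S" using binv_Bij aB bB by auto
  have abB: "a \<otimes>\<^bsub>?G\<^esub> b \<in> Bij ?S" using bmult_Bij aB bB by blast
  have abaB: "a \<otimes>\<^bsub>?G\<^esub> b \<otimes>\<^bsub>?G\<^esub> (inv\<^bsub>?G\<^esub> a) \<in> Bij ?S" using bmult_Bij abB iaB by blast
  have cB: "c \<in> Bij ?S" unfolding c_def using bmult_Bij abaB ibB by blast
  have cev: "c z = a (b ((inv\<^bsub>?G\<^esub> a) ((inv\<^bsub>?G\<^esub> b) z)))" if z: "z \<in> ?S" for z
  proof -
    have z1: "(inv\<^bsub>?G\<^esub> b) z \<in> ?S" by (rule Bij_in[OF ibB z])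
    have z2: "(inv\<^bsub>?G\<^esub> a) ((inv\<^bsub>?G\<^esub> b) z) \<in> ?S" by (rule Bij_in[OF iaB z1])
    show ?thesis unfolding c_def using bmult[OF abaB ibB z] bmult[OF abB iaB z1] bmult[OF aB bB z2] by simp
  qed
  have cD: "c \<in> derived_set ?G (Fd d)" unfolding c_def using aF bF by blast
  have fix_out: "\<forall>\<mu>\<in>?S. \<mu> \<notin> cone d u \<longrightarrow> c \<mu> = \<mu>"
  proof (intro ballI impI)
    fix \<mu> assume m: "\<mu> \<in> ?S" "\<mu> \<notin> cone d u"
    have m1: "\<mu> \<notin> cone d (u@[1])" using m cone_append_sub by blast
    have am: "a \<mu> = \<mu>" unfolding a_def using E_out[OF g u m(1,2)] .
    have bm: "b \<mu> = \<mu>" unfolding b_def using E_out[OF g u1 m(1) m1] .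
    have "(inv\<^bsub>?G\<^esub> b) \<mu> = \<mu>" by (rule binv_eq[OF bB m(1)], rule bm)
    moreover have "(inv\<^bsub>?G\<^esub> a) \<mu> = \<mu>" by (rule binv_eq[OF aB m(1)], rule am)
    ultimately show "c \<mu> = \<mu>" using cev[OF m(1)] am bm by simp
  qed
  have bkS: "b \<kappa> \<in> ?S" by (rule Bij_in[OF bB k])
  have cbk: "c (b \<kappa>) = \<kappa>"
  proof -
    have "(inv\<^bsub>?G\<^esub> b) (b \<kappa>) = \<kappa>" by (rule binv_eq[OF bB k], rule refl)
    moreover have "(inv\<^bsub>?G\<^esub> a) \<kappa> = \<nu>" by (rule binv_eq[OF aB nu], rule anu)
    ultimately show ?thesis using cev[OF bkS] bnu anu by simp
  qed
  have bkc: "b \<kappa> \<in> cone d u"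
  proof -
    have w12: "[1,2] \<in> words d" using d by (auto simp: words_def)
    have "hcone [1,2] \<rho>0 \<in> bdry d" by (rule hcone_bdry[OF w12 r0])
    then have "b \<kappa> \<in> cone d (u@[1])" unfolding bk by (rule hcone_in_cone[OF u1])
    then show ?thesis using cone_append_sub by blast
  qed
  have mv: "\<exists>\<pi>\<in>cone d u. c \<pi> \<noteq> \<pi>"
  proof
    show "c (b \<kappa>) \<noteq> b \<kappa>" using cbk bkk by simp
  qed (rule bkc)
  show ?thesis by (rule exI[of _ c]) (intro conjI cD cB fix_out mv)
qed



lemma localize:
  assumes x: "x \<in> VdG d G" and k: "\<kappa> \<in> bdry d" and ne: "x \<kappa> \<noteq> \<kappa>"
  shows "\<exists>w\<in>words d. \<forall>\<mu>\<in>cone d w. x \<mu> \<notin> cone d w"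
proof -
  obtain n wp wm j g where cp: "cone_partition d n wp" and cm: "cone_partition d n wm"
    and act: "\<forall>i<n. \<forall>\<kappa>\<in>bdry d. x (hcone (wp i) \<kappa>) = hcone (wm (j i)) (bact (g i) \<kappa>)"
    using x unfolding VdG_def by blast
  have cov: "(\<Union>i<n. cone d (wp i)) = bdry d" using cp unfolding cone_partition_def by blast
  obtain i where i: "i < n" "\<kappa> \<in> cone d (wp i)" using k cov by blast
  define p where "p = wp i"
  define q where "q = wm (j i)"
  define h where "h = g i"
  have actp: "\<And>\<rho>. \<rho> \<in> bdry d \<Longrightarrow> x (hcone p \<rho>) = hcone q (bact h \<rho>)"
    using act i(1) unfolding p_def q_def h_def by blast
  have kp: "\<kappa> \<in> cone d p" using i p_def by simp
  define \<rho> where "\<rho> = shiftn (length p) \<kappa>"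
  have r: "\<rho> \<in> bdry d" unfolding \<rho>_def using bdry_shiftn k by blast
  have kr: "\<kappa> = hcone p \<rho>" unfolding \<rho>_def using cone_hcone_eq[OF kp] by simp
  obtain N where N: "x \<kappa> N \<noteq> \<kappa> N" using ne by (meson ext)
  define L where "L = N + 1 + length p"
  define w where "w = map \<kappa> [0..<L]"
  have ww: "w \<in> words d" using k unfolding w_def words_def bdry_def by auto
  have lw: "length w = L" unfolding w_def by simp
  have wn: "\<And>m. m < L \<Longrightarrow> w ! m = \<kappa> m" unfolding w_def by simp
  have main: "x \<mu> \<notin> cone d w" if mu: "\<mu> \<in> cone d w" for \<mu>
  proof
    assume xm: "x \<mu> \<in> cone d w"
    have mb: "\<mu> \<in> bdry d" using mu cone_sub_bdry by blast
    have agr: "\<And>m. m < L \<Longrightarrow> \<mu> m = \<kappa> m" using mu lw wn unfolding cone_iff by simp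
    have mp: "\<mu> \<in> cone d p"
      unfolding cone_iff using mb agr kp[unfolded cone_iff] L_def by simp
    define \<rho>' where "\<rho>' = shiftn (length p) \<mu>"
    have r': "\<rho>' \<in> bdry d" unfolding \<rho>'_def using bdry_shiftn mb by blast
    have mr: "\<mu> = hcone p \<rho>'" unfolding \<rho>'_def using cone_hcone_eq[OF mp] by simp
    have ra: "\<And>t. t < Suc N \<Longrightarrow> \<rho>' t = \<rho> t"
      unfolding \<rho>'_def \<rho>_def shiftn_def using agr L_def by simp
    have ba: "bact h \<rho>' m = bact h \<rho> m" if "m \<le> N" for m
    proof -
      have e: "map \<rho>' [0..<Suc m] = map \<rho> [0..<Suc m]" using ra that by (intro map_cong) auto
      show ?thesis unfolding bact_def e by (rule refl)
    qed
    have e1: "x \<mu> N = hcone q (bact h \<rho>') N" using mr actp[OF r'] by simp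
    have e2: "x \<kappa> N = hcone q (bact h \<rho>) N" using kr actp[OF r] by simp
    have e3: "hcone q (bact h \<rho>') N = hcone q (bact h \<rho>) N" unfolding hcone_def using ba by simp
    have "x \<mu> N = x \<kappa> N" using e1 e2 e3 by simp
    moreover have "x \<mu> N = \<kappa> N" using xm lw wn L_def unfolding cone_iff by simp
    ultimately show False using N by simp
  qed
  show ?thesis using ww main by blast
qed



lemma u_cone:
  assumes m: "\<mu> \<in> cone d (w @ replicate k 1 @ [2])"
  shows "\<mu> (length w + k) = 2" "\<And>t. t < k \<Longrightarrow> \<mu> (length w + t) = 1"
proof -
  have h: "\<And>n. n < length w + k + 1 \<Longrightarrow> \<mu> n = (w @ replicate k 1 @ [2]) ! n"
    using m unfolding cone_iff by simp
  have "\<mu> (length w + k) = (w @ replicate k 1 @ [2]) ! (length w + k)" using h by simp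
  also have "\<dots> = (replicate k 1 @ [2]) ! k" by (rule nth_append_length_plus)
  also have "\<dots> = 2" by (simp add: nth_append)
  finally show "\<mu> (length w + k) = 2" .
  fix t assume t: "t < k"
  have "\<mu> (length w + t) = (w @ replicate k 1 @ [2]) ! (length w + t)" using h t by simp
  also have "\<dots> = (replicate k 1 @ [2]) ! t" by (rule nth_append_length_plus)
  also have "\<dots> = 1" using t by (simp add: nth_append)
  finally show "\<mu> (length w + t) = 1" .
qed

lemma u_disj:
  assumes "k \<noteq> l" "\<mu> \<in> cone d (w @ replicate k 1 @ [2])"
  shows "\<mu> \<notin> cone d (w @ replicate l 1 @ [2])"
proof
  assume l: "\<mu> \<in> cone d (w @ replicate l 1 @ [2])"
  show False
  proof (cases "k < l")
    case True
    then show False using u_cone[OF assms(2)] u_cone[OF l] by fastforce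
  next
    case False
    then have "l < k" using assms(1) by simp
    then show False using u_cone[OF assms(2)] u_cone[OF l] by fastforce
  qed
qed

theorem mainTheorem9:
  fixes d :: nat and G :: "(nat list \<Rightarrow> nat list) set"
  assumes "d \<ge> 2" and "self_similar d G"
  shows "\<forall>x \<in> VdG d G. x \<noteq> \<one>\<^bsub>BdryGroup d\<^esub> \<longrightarrow>
           infinite {c \<otimes>\<^bsub>BdryGroup d\<^esub> x \<otimes>\<^bsub>BdryGroup d\<^esub> inv\<^bsub>BdryGroup d\<^esub> c | c.
                     c \<in> derived (BdryGroup d) (Fd d)}"
proof (intro ballI impI)
  fix x assume xV: "x \<in> VdG d G" and x1: "x \<noteq> \<one>\<^bsub>BdryGroup d\<^esub>"
  let ?S = "bdry d"
  let ?G = "BdryGroup d"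
  have d: "d \<ge> 2" using assms(1) .
  have xB: "x \<in> Bij ?S" using xV unfolding VdG_def by blast
  have "\<exists>\<kappa>\<in>?S. x \<kappa> \<noteq> \<kappa>"
  proof (rule ccontr)
    assume "\<not> (\<exists>\<kappa>\<in>?S. x \<kappa> \<noteq> \<kappa>)"
    then have fx: "\<And>\<kappa>. \<kappa> \<in> ?S \<Longrightarrow> x \<kappa> = (\<lambda>\<kappa>\<in>?S. \<kappa>) \<kappa>" by simp
    have "x = (\<lambda>\<kappa>\<in>?S. \<kappa>)"
      by (rule extensionalityI[OF Bij_imp_extensional[OF xB] restrict_extensional fx])
    then show False using x1 by (simp add: BijGroup_def)
  qed
  then obtain \<kappa> where k: "\<kappa> \<in> ?S" "x \<kappa> \<noteq> \<kappa>" by blast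
  obtain w where ww: "w \<in> words d" and wout: "\<forall>\<mu>\<in>cone d w. x \<mu> \<notin> cone d w"
    using localize[OF xV k] by blast
  define u where "u k = w @ replicate k 1 @ [2]" for k
  have uw: "u k \<in> words d" for k unfolding u_def using ww d by (auto simp: words_def)
  have usub: "cone d (u k) \<subseteq> cone d w" for k unfolding u_def by (rule cone_append_sub)
  define P where "P k c \<longleftrightarrow> c \<in> derived_set ?G (Fd d) \<and> c \<in> Bij ?S \<and>
     (\<forall>\<mu>\<in>?S. \<mu> \<notin> cone d (u k) \<longrightarrow> c \<mu> = \<mu>) \<and> (\<exists>\<pi>\<in>cone d (u k). c \<pi> \<noteq> \<pi>)" for k c
  have "\<forall>k. \<exists>c. P k c" unfolding P_def using comm_exists[OF d uw] by blast
  then have "\<exists>cc. \<forall>k. P k (cc k)" by (rule choice)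
  then obtain cc where ccP: "\<forall>k. P k (cc k)" by (elim exE)
  have cc: "\<And>k. cc k \<in> derived_set ?G (Fd d)" "\<And>k. cc k \<in> Bij ?S"
     "\<And>k \<mu>. \<mu> \<in> ?S \<Longrightarrow> \<mu> \<notin> cone d (u k) \<Longrightarrow> cc k \<mu> = \<mu>"
     "\<And>k. \<exists>\<pi>\<in>cone d (u k). cc k \<pi> \<noteq> \<pi>"
    using ccP unfolding P_def by blast+
  define cj where "cj k = cc k \<otimes>\<^bsub>?G\<^esub> x \<otimes>\<^bsub>?G\<^esub> inv\<^bsub>?G\<^esub> (cc k)" for k
  have cjev: "cj k z = cc k (x ((inv\<^bsub>?G\<^esub> (cc k)) z))" if z: "z \<in> ?S" for k z
  proof -
    have iB: "inv\<^bsub>?G\<^esub> (cc k) \<in> Bij ?S" by (rule binv_Bij[OF cc(2)])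
    have cxB: "cc k \<otimes>\<^bsub>?G\<^esub> x \<in> Bij ?S" by (rule bmult_Bij[OF cc(2) xB])
    have z1: "(inv\<^bsub>?G\<^esub> (cc k)) z \<in> ?S" by (rule Bij_in[OF iB z])
    show ?thesis unfolding cj_def using bmult[OF cxB iB z] bmult[OF cc(2) xB z1] by simp
  qed
  have inj: "inj cj"
  proof (rule injI, rule ccontr)
    fix k l assume eq: "cj k = cj l" and kl: "k \<noteq> l"
    obtain \<pi> where pk: "\<pi> \<in> cone d (u k)" and mv: "cc k \<pi> \<noteq> \<pi>" using cc(4) by blast
    have pS: "\<pi> \<in> ?S" using pk cone_sub_bdry by blast
    have cpS: "cc k \<pi> \<in> ?S" by (rule Bij_in[OF cc(2) pS])
    have cpk: "cc k \<pi> \<in> cone d (u k)"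
    proof (rule ccontr)
      assume "cc k \<pi> \<notin> cone d (u k)"
      then have "cc k (cc k \<pi>) = cc k \<pi>" using cc(3) cpS by blast
      then have "cc k \<pi> = \<pi>" using inj_onD[OF Bij_inj[OF cc(2)]] cpS pS by blast
      then show False using mv by simp
    qed
    have pw: "\<pi> \<in> cone d w" using pk usub by blast
    have cpw: "cc k \<pi> \<in> cone d w" using cpk usub by blast
    have xpS: "x \<pi> \<in> ?S" by (rule Bij_in[OF xB pS])
    have xcpS: "x (cc k \<pi>) \<in> ?S" by (rule Bij_in[OF xB cpS])
    have "cj k (cc k \<pi>) = cc k (x \<pi>)"
    proof -
      have "(inv\<^bsub>?G\<^esub> (cc k)) (cc k \<pi>) = \<pi>" by (rule binv_eq[OF cc(2) pS], rule refl)
      then show ?thesis using cjev[OF cpS] by simp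
    qed
    also have "\<dots> = x \<pi>"
    proof -
      have "x \<pi> \<notin> cone d (u k)" using wout pw usub by blast
      then show ?thesis using cc(3) xpS by blast
    qed
    finally have e1: "cj k (cc k \<pi>) = x \<pi>" .
    have ncl: "cc k \<pi> \<notin> cone d (u l)" using u_disj[OF kl] cpk unfolding u_def by blast
    have "cj l (cc k \<pi>) = cc l (x (cc k \<pi>))"
    proof -
      have "cc l (cc k \<pi>) = cc k \<pi>" using cc(3) cpS ncl by blast
      then have "(inv\<^bsub>?G\<^esub> (cc l)) (cc k \<pi>) = cc k \<pi>" by (rule binv_eq[OF cc(2) cpS])
      then show ?thesis using cjev[OF cpS] by simp
    qed
    also have "\<dots> = x (cc k \<pi>)"
    proof -
      have "x (cc k \<pi>) \<notin> cone d (u l)" using wout cpw usub by blast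
      then show ?thesis using cc(3) xcpS by blast
    qed
    finally have e2: "cj l (cc k \<pi>) = x (cc k \<pi>)" .
    have "x \<pi> = x (cc k \<pi>)" using e1 e2 eq by simp
    then have "\<pi> = cc k \<pi>" using inj_onD[OF Bij_inj[OF xB]] pS cpS by blast
    then show False using mv by simp
  qed
  have sub: "range cj \<subseteq> {c \<otimes>\<^bsub>?G\<^esub> x \<otimes>\<^bsub>?G\<^esub> inv\<^bsub>?G\<^esub> c | c. c \<in> derived ?G (Fd d)}"
  proof
    fix y assume "y \<in> range cj"
    then obtain k where y: "y = cj k" by blast
    have "cc k \<in> derived ?G (Fd d)" unfolding derived_def by (rule generate.incl[OF cc(1)])
    then show "y \<in> {c \<otimes>\<^bsub>?G\<^esub> x \<otimes>\<^bsub>?G\<^esub> inv\<^bsub>?G\<^esub> c | c. c \<in> derived ?G (Fd d)}"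
      unfolding y cj_def by blast
  qed
  show "infinite {c \<otimes>\<^bsub>?G\<^esub> x \<otimes>\<^bsub>?G\<^esub> inv\<^bsub>?G\<^esub> c | c. c \<in> derived ?G (Fd d)}"
  proof
    assume "finite {c \<otimes>\<^bsub>?G\<^esub> x \<otimes>\<^bsub>?G\<^esub> inv\<^bsub>?G\<^esub> c | c. c \<in> derived ?G (Fd d)}"
    then have "finite (range cj)" using sub finite_subset by blast
    then have "finite (UNIV :: nat set)" using finite_imageD inj by blast
    then show False by simp
  qed
qed


end
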